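(* Let $K$ be a field, $\mathcal{H}$ a simple hypergraph on $\{x_1,\dots,x_n\}$ with edges $S_1,\dots,S_m$, $R=K[x_1,\dots,x_n]$, let $i,j$ be integers and let $\mathcal{B}_{i,j}$ be the set of basis elements $\overline{e_{\ell_1,\dots,\ell_i}}$ of $\overline{T}_i$ with $\overline{e_{\ell_1,\dots,\ell_i}}\in\mathrm{Ker}\,\overline{\partial}_i\setminus\mathrm{Im}\,\overline{\partial}_{i+1}$ and $|\bigcup_{k=1}^iS_{\ell_k}|=j$. (1) If for all pairwise distinct edges $E_1,\dots,E_i$ of $\mathcal{H}$ (in any order) with $|\bigcup_{\ell=1}^iE_\ell|=j$ we have $E_1\nsubseteq\bigcup_{\ell=2}^iE_\ell$, then $\{e+\mathrm{Im}\,\overline{\partial}_{i+1}: e\in\mathcal{B}_{i,j}\}$ generates $(\mathrm{Ker}\,\overline{\partial}_i/\mathrm{Im}\,\overline{\partial}_{i+1})_j$ over $K$, and hence $\beta_{i,j}(R/I(\mathcal{H}))\le|\mathcal{B}_{i,j}|$. (2) If for all pairwise distinct edges $E_1,\dots,E_{i+1}$ of $\mathcal{H}$ with $E_{i+1}\subseteq\bigcup_{\ell=1}^iE_\ell$ and $|\bigcup_{\ell=1}^iE_\ell|=j$ we have $E_k\nsubseteq\bigcup_{1\le\ell\le i+1,\ell\neq k}E_\ell$ for all $1\le k\le i$, then $\{e+\mathrm{Im}\,\overline{\partial}_{i+1}: e\in\mathcal{B}_{i,j}\}$ is linearly independent over $K$ in $(\mathrm{Ker}\,\overline{\partial}_i/\mathrm{Im}\,\overline{\partial}_{i+1})_j$,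 and hence $\beta_{i,j}(R/I(\mathcal{H}))\ge|\mathcal{B}_{i,j}|$. (3) If the hypotheses of both (1) and (2) hold, then $\beta_{i,j}(R/I(\mathcal{H}))=|\mathcal{B}_{i,j}|$. In particular this equality holds when $j=ti$, where $t=\max\{|S|:S\in\mathcal{E}(\mathcal{H})\}$.
   Context: A simple hypergraph $\mathcal{H}$ on $\{x_1,\dots,x_n\}$ is a set $\mathcal{E}(\mathcal{H})$ of subsets (edges) of cardinality at least $2$, none contained in another; $I(\mathcal{H})=\langle \prod_{x\in S}x : S\in\mathcal{E}(\mathcal{H})\rangle\subseteq R$, $R$ standard graded, $\beta_{i,j}(R/I)=\dim_K\mathrm{Tor}_i^R(R/I,K)_j$. With edges ordered $S_1,\dots,S_m$, let $\overline{T}_0=K$ and for $i\ge1$ let $\overline{T}_i$ be the $K$-vector space with basis $\overline{e_{\ell_1,\dots,\ell_i}}$, $1\le\ell_1<\dots<\ell_i\le m$, where $\overline{e_{\ell_1,\dots,\ell_i}}$ has degree $|\bigcup_{t=1}^iS_{\ell_t}|$, with differential $\overline{\partial}_i(\overline{e_{\ell_1,\dots,\ell_i}})=\sum_{k:\,S_{\ell_k}\subseteq\bigcup_{t\neq k}S_{\ell_t}}(-1)^k\,\overline{e_{\ell_1,\dots,\widehat{\ell_k},\dots,\ell_i}}$ (this is the Taylor resolution of $R/I(\mathcal{H})$ tensored with $K=R/\langle x_1,\dots,x_n\rangle$), so that $\beta_{i,j}(R/I(\mathcal{H}))=\dim_K(\mathrm{Ker}\,\overline{\partial}_i/\mathrm{Im}\,\overline{\partial}_{i+1})_j$.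 *)

theory Defs
  imports Complex_Main "HOL-Library.Function_Algebras"
begin

text \<open>Vertices are the natural numbers 1..n (standing for x_1..x_n); the edges
  are S 1, ..., S m. Elements of the chain spaces are finitely supported
  K-valued functions on index sets L = {l_1 < ... < l_i}; the function
  ind L is the basis element e_L.\<close>

definition simple_hypergraph :: "nat \<Rightarrow> nat \<Rightarrow> (nat \<Rightarrow> nat set) \<Rightarrow> bool" where
  "simple_hypergraph n m S \<longleftrightarrow>
     inj_on S {1..m} \<and>
     (\<forall>l\<in>{1..m}. S l \<subseteq> {1..n} \<and> 2 \<le> card (S l)) \<and>
     (\<forall>l\<in>{1..m}. \<forall>l'\<in>{1..m}. l \<noteq> l' \<longrightarrow> \<not> S l \<subseteq> S l')"

definition scalef :: "'k::field \<Rightarrow> (nat set \<Rightarrow> 'k) \<Rightarrow> (nat set \<Rightarrow> 'k)" where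
  "scalef a f = (\<lambda>L. a * f L)"

definition ind :: "nat set \<Rightarrow> (nat set \<Rightarrow> 'k::field)" where
  "ind L = (\<lambda>M. if M = L then 1 else 0)"

definition tdeg :: "(nat \<Rightarrow> nat set) \<Rightarrow> nat set \<Rightarrow> nat" where
  "tdeg S L = card (\<Union>l\<in>L. S l)"

definition idx :: "nat \<Rightarrow> nat \<Rightarrow> nat set set" where
  "idx m i = {L. L \<subseteq> {1..m} \<and> card L = i}"

definition idxdeg :: "nat \<Rightarrow> (nat \<Rightarrow> nat set) \<Rightarrow> nat \<Rightarrow> nat \<Rightarrow> nat set set" where
  "idxdeg m S i j = {L \<in> idx m i. tdeg S L = j}"

definition Tsp :: "nat \<Rightarrow> nat \<Rightarrow> (nat set \<Rightarrow> 'k::field) set" where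
  "Tsp m i = {c. \<forall>L. c L \<noteq> 0 \<longrightarrow> L \<in> idx m i}"

definition Tdeg :: "nat \<Rightarrow> (nat \<Rightarrow> nat set) \<Rightarrow> nat \<Rightarrow> nat \<Rightarrow> (nat set \<Rightarrow> 'k::field) set" where
  "Tdeg m S i j = {c. \<forall>L. c L \<noteq> 0 \<longrightarrow> L \<in> idxdeg m S i j}"

text \<open>position of l in the increasingly ordered set L (1-based)\<close>
definition pos :: "nat set \<Rightarrow> nat \<Rightarrow> nat" where
  "pos L l = card {l'\<in>L. l' \<le> l}"

definition bdry :: "(nat \<Rightarrow> nat set) \<Rightarrow> nat set \<Rightarrow> (nat set \<Rightarrow> 'k::field)" where
  "bdry S L = (\<Sum>l\<in>{l\<in>L. S l \<subseteq> (\<Union>l'\<in>L - {l}. S l')}.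
                  scalef ((-1) ^ pos L l) (ind (L - {l})))"

definition dif :: "nat \<Rightarrow> (nat \<Rightarrow> nat set) \<Rightarrow> nat \<Rightarrow> (nat set \<Rightarrow> 'k::field) \<Rightarrow> (nat set \<Rightarrow> 'k)" where
  "dif m S i c = (\<Sum>L\<in>idx m i. scalef (c L) (bdry S L))"

definition Kerj :: "nat \<Rightarrow> (nat \<Rightarrow> nat set) \<Rightarrow> nat \<Rightarrow> nat \<Rightarrow> (nat set \<Rightarrow> 'k::field) set" where
  "Kerj m S i j = {c \<in> Tdeg m S i j. dif m S i c = 0}"

definition Imj :: "nat \<Rightarrow> (nat \<Rightarrow> nat set) \<Rightarrow> nat \<Rightarrow> nat \<Rightarrow> (nat set \<Rightarrow> 'k::field) set" where
  "Imj m S i j = dif m S (i + 1) ` Tsp m (i + 1) \<inter> Tdeg m S i j"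

text \<open>beta_{i,j}(R/I(H)) = dim_K (Ker d_i / Im d_{i+1})_j
   = dim_K (Ker d_i)_j - dim_K (Im d_{i+1})_j\<close>
definition betti :: "'k::field itself \<Rightarrow> nat \<Rightarrow> (nat \<Rightarrow> nat set) \<Rightarrow> nat \<Rightarrow> nat \<Rightarrow> nat" where
  "betti _ m S i j =
     vector_space.dim (scalef :: 'k \<Rightarrow> _) (Kerj m S i j :: (nat set \<Rightarrow> 'k) set)
     - vector_space.dim (scalef :: 'k \<Rightarrow> _) (Imj m S i j :: (nat set \<Rightarrow> 'k) set)"

text \<open>the set B_{i,j} (as index sets L with e_L in Ker \ Im, degree j)\<close>
definition Bset :: "'k::field itself \<Rightarrow> nat \<Rightarrow> (nat \<Rightarrow> nat set) \<Rightarrow> nat \<Rightarrow> nat \<Rightarrow> nat set set" where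
  "Bset _ m S i j = {L \<in> idxdeg m S i j.
      (ind L :: nat set \<Rightarrow> 'k) \<in> Kerj m S i j \<and>
      (ind L :: nat set \<Rightarrow> 'k) \<notin> dif m S (i + 1) ` Tsp m (i + 1)}"

end

theory Submission
  imports Defs "HOL-Combinatorics.Transposition"
begin

lemma sum_fun_apply: "(\<Sum>x\<in>A. f x) y = (\<Sum>x\<in>A. f x y)"
  by (induction A rule: infinite_finite_induct) auto

lemma scalef_apply[simp]: "scalef a f L = a * f L" by (simp add: scalef_def)
lemma ind_apply: "ind L M = (if M = L then 1 else 0)" by (simp add: ind_def)

interpretation V: vector_space "scalef :: 'k::field \<Rightarrow> (nat set \<Rightarrow> 'k) \<Rightarrow> _"
  by unfold_locales (auto simp: scalef_def fun_eq_iff algebra_simps)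

lemma finite_idx: "finite (idx m i)"
  by (rule finite_subset[of _ "Pow {1..m}"]) (auto simp: idx_def)

lemma finite_idxdeg: "finite (idxdeg m S i j)"
  using finite_idx by (auto simp: idxdeg_def)

lemma dif_apply: "dif m S p c M = (\<Sum>L\<in>idx m p. c L * bdry S L M)"
  by (simp add: dif_def sum_fun_apply)

lemma bdry_apply: "bdry S L M = (\<Sum>l\<in>{l\<in>L. S l \<subseteq> (\<Union>l'\<in>L - {l}. S l')}. (-1) ^ pos L l * ind (L - {l}) M)"
  by (simp add: bdry_def sum_fun_apply)

lemma dif_scale_ind:
  assumes "L \<in> idx m p"
  shows "dif m S p (scalef a (ind L)) = (scalef a (bdry S L) :: nat set \<Rightarrow> 'k::field)"
proof (rule ext)
  fix M
  have "(\<Sum>L'\<in>idx m p. (a * ind L L') * bdry S L' M) = (\<Sum>L'\<in>idx m p. if L' = L then a * (bdry S L M :: 'k) else 0)"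
    by (rule sum.cong) (auto simp: ind_apply)
  also have "\<dots> = a * bdry S L M" using assms finite_idx by simp
  finally show "dif m S p (scalef a (ind L)) M = scalef a (bdry S L) M" by (simp add: dif_apply)
qed

lemma dif_ind: "L \<in> idx m p \<Longrightarrow> dif m S p (ind L) = (bdry S L :: nat set \<Rightarrow> 'k::field)"
  using dif_scale_ind[of L m p S "1::'k"] by (simp add: scalef_def)

lemma dif_add: "dif m S p (x + y) = dif m S p x + (dif m S p y :: nat set \<Rightarrow> 'k::field)"
  by (simp add: fun_eq_iff dif_apply distrib_right sum.distrib)

lemma dif_scale: "dif m S p (scalef a x) = scalef a (dif m S p x :: nat set \<Rightarrow> 'k::field)"
  by (simp add: fun_eq_iff dif_apply sum_distrib_left mult.assoc)

lemma dif_zero: "dif m S p 0 = (0 :: nat set \<Rightarrow> 'k::field)"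
  by (simp add: fun_eq_iff dif_apply)

lemma ind_Tsp: "L \<in> idx m p \<Longrightarrow> scalef a (ind L) \<in> Tsp m p"
  by (auto simp: Tsp_def ind_apply)

lemma subspace_IM: "V.subspace (dif m S p ` Tsp m p :: (nat set \<Rightarrow> 'k::field) set)"
  unfolding V.subspace_def
proof (intro conjI ballI allI)
  show "(0 :: nat set \<Rightarrow> 'k) \<in> dif m S p ` Tsp m p"
    by (rule image_eqI[of _ _ 0]) (auto simp: dif_zero Tsp_def)
next
  fix x y :: "nat set \<Rightarrow> 'k" assume "x \<in> dif m S p ` Tsp m p" "y \<in> dif m S p ` Tsp m p"
  then obtain u v where "u \<in> Tsp m p" "v \<in> Tsp m p" "x = dif m S p u" "y = dif m S p v" by auto
  then show "x + y \<in> dif m S p ` Tsp m p"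
    by (intro image_eqI[of _ _ "u + v"]) (auto simp: dif_add Tsp_def, metis add_0)
next
  fix c :: 'k and x :: "nat set \<Rightarrow> 'k" assume "x \<in> dif m S p ` Tsp m p"
  then obtain u where "u \<in> Tsp m p" "x = dif m S p u" by auto
  then show "scalef c x \<in> dif m S p ` Tsp m p"
    by (intro image_eqI[of _ _ "scalef c u"]) (auto simp: dif_scale Tsp_def)
qed

lemma subspace_Tdeg: "V.subspace (Tdeg m S i j :: (nat set \<Rightarrow> 'k::field) set)"
  unfolding V.subspace_def Tdeg_def by (auto, metis add_0)

lemma subspace_Imj: "V.subspace (Imj m S i j :: (nat set \<Rightarrow> 'k::field) set)"
  unfolding Imj_def by (intro V.subspace_inter subspace_IM subspace_Tdeg)

lemma Tdeg_expand:
  assumes "c \<in> Tdeg m S i j"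
  shows "c = (\<Sum>L\<in>idxdeg m S i j. scalef (c L) (ind L :: nat set \<Rightarrow> 'k::field))"
proof (rule ext)
  fix M
  have "(\<Sum>L\<in>idxdeg m S i j. c L * (ind L M :: 'k)) = (\<Sum>L\<in>idxdeg m S i j. if L = M then c M else 0)"
    by (rule sum.cong) (auto simp: ind_apply)
  also have "\<dots> = c M" using assms finite_idxdeg by (auto simp: Tdeg_def)
  finally show "c M = (\<Sum>L\<in>idxdeg m S i j. scalef (c L) (ind L)) M" by (simp add: sum_fun_apply)
qed

lemma inj_ind: "inj (ind :: nat set \<Rightarrow> nat set \<Rightarrow> 'k::field)"
proof (rule injI)
  fix L M :: "nat set" assume "(ind L :: nat set \<Rightarrow> 'k) = ind M"
  then have "(ind L L :: 'k) = ind M L" by simp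
  then show "L = M" by (auto simp: ind_apply split: if_splits)
qed

lemma indep_ind: "finite X \<Longrightarrow> V.independent (ind ` X :: (nat set \<Rightarrow> 'k::field) set)"
proof (rule V.independent_if_scalars_zero)
  fix f :: "(nat set \<Rightarrow> 'k) \<Rightarrow> 'k" and x :: "nat set \<Rightarrow> 'k"
  assume X: "finite X" and s: "(\<Sum>x\<in>ind ` X. scalef (f x) x) = 0" and x: "x \<in> ind ` X"
  then obtain L where L: "L \<in> X" "x = ind L" by auto
  have "0 = (\<Sum>x\<in>ind ` X. scalef (f x) x) L" using s by simp
  also have "\<dots> = (\<Sum>M\<in>X. f (ind M) * ind M L)"
    by (simp add: sum_fun_apply sum.reindex inj_on_subset[OF inj_ind])
  also have "\<dots> = (\<Sum>M\<in>X. if M = L then f (ind L) else 0)"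
    by (rule sum.cong) (auto simp: ind_apply)
  also have "\<dots> = f x" using L X by simp
  finally show "f x = 0" by simp
qed simp

lemma card_ind: "card (ind ` X :: (nat set \<Rightarrow> 'k::field) set) = card X"
  by (rule card_image) (rule inj_on_subset[OF inj_ind], simp)

lemma enum_at:
  assumes "finite A" "card A = p" "a \<in> A" "q \<in> {1..p}"
  shows "\<exists>h. bij_betw h {1..p} A \<and> h q = a"
proof -
  obtain g where g: "bij_betw g {1..p} A" using ex_bij_betw_nat_finite_1[OF assms(1)] assms(2) by auto
  then obtain r where r: "r \<in> {1..p}" "g r = a" using assms(3) by (auto simp: bij_betw_def)
  have "bij_betw (g \<circ> transpose q r) {1..p} A"
    by (rule bij_betw_trans[OF _ g]) (use r assms(4) in simp)
  moreover have "(g \<circ> transpose q r) q = a" using r by simp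
  ultimately show ?thesis by blast
qed


lemma H1_use:
  assumes hyp: "simple_hypergraph n m S"
    and H1: "\<forall>E :: nat \<Rightarrow> nat set.
              (\<forall>k\<in>{1..i}. E k \<in> S ` {1..m}) \<and> inj_on E {1..i} \<and>
              card (\<Union>k\<in>{1..i}. E k) = j \<and> 1 \<le> i \<longrightarrow>
              \<not> E 1 \<subseteq> (\<Union>k\<in>{2..i}. E k)"
    and L: "L \<in> idxdeg m S i j" and l: "l \<in> L"
  shows "\<not> S l \<subseteq> (\<Union>l'\<in>L - {l}. S l')"
proof -
  have Lsub: "L \<subseteq> {1..m}" and cL: "card L = i" and tL: "tdeg S L = j"
    using L by (auto simp: idxdeg_def idx_def)
  have fL: "finite L" using Lsub finite_subset by blast
  have i1: "1 \<le> i" using cL fL l by (metis One_nat_def Suc_leI card_gt_0_iff empty_iff)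
  obtain h where h: "bij_betw h {1..i} L" "h 1 = l" using enum_at[OF fL cL l] i1 by auto
  have hI: "h ` {1..i} = L" using h by (simp add: bij_betw_def)
  have inj: "inj_on S {1..m}" using hyp by (simp add: simple_hypergraph_def)
  define E where "E = S \<circ> h"
  have EU: "\<And>A. (\<Union>k\<in>A. E k) = (\<Union>l'\<in>h ` A. S l')" unfolding E_def by (simp add: image_image)
  have "\<forall>k\<in>{1..i}. E k \<in> S ` {1..m}" using hI Lsub E_def by auto
  moreover have "inj_on E {1..i}" unfolding E_def using h(1) inj Lsub hI
    by (metis bij_betw_def comp_inj_on inj_on_subset)
  moreover have "(\<Union>k\<in>{1..i}. E k) = (\<Union>l\<in>L. S l)" using hI E_def by auto
  hence "card (\<Union>k\<in>{1..i}. E k) = j" using tL by (simp add: tdeg_def)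
  ultimately have "\<not> E 1 \<subseteq> (\<Union>k\<in>{2..i}. E k)" using spec[OF H1, of E] i1 by blast
  moreover have h2: "h ` {2..i} = L - {l}"
  proof -
    have "{2..i} = {1..i} - {1}" by auto
    moreover have "h ` ({1..i} - {1}) = h ` {1..i} - h ` {1}"
      by (rule inj_on_image_set_diff) (use h(1) i1 in \<open>auto simp: bij_betw_def\<close>)
    ultimately have "h ` {2..i} = h ` {1..i} - h ` {1}" by simp
    then show ?thesis using hI h(2) by simp
  qed
  hence "(\<Union>k\<in>{2..i}. E k) = (\<Union>l'\<in>L - {l}. S l')" by (simp only: EU h2)
  ultimately show ?thesis using h(2) E_def by simp
qed

lemma H2_use:
  assumes hyp: "simple_hypergraph n m S"
    and H2: "\<forall>E :: nat \<Rightarrow> nat set.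
              (\<forall>k\<in>{1..i+1}. E k \<in> S ` {1..m}) \<and> inj_on E {1..i+1} \<and>
              E (i+1) \<subseteq> (\<Union>k\<in>{1..i}. E k) \<and>
              card (\<Union>k\<in>{1..i}. E k) = j \<longrightarrow>
              (\<forall>k\<in>{1..i}. \<not> E k \<subseteq> (\<Union>l\<in>{1..i+1} - {k}. E l))"
    and L: "L \<in> idx m (i+1)" and l: "l \<in> L" and sub: "S l \<subseteq> (\<Union>l'\<in>L - {l}. S l')"
    and deg: "tdeg S (L - {l}) = j" and l2: "l2 \<in> L" "l2 \<noteq> l"
  shows "\<not> S l2 \<subseteq> (\<Union>l'\<in>L - {l2}. S l')"
proof -
  have Lsub: "L \<subseteq> {1..m}" and cL: "card L = i+1" using L by (auto simp: idx_def)
  have fL: "finite L" using Lsub finite_subset by blast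
  obtain h where h: "bij_betw h {1..i+1} L" "h (i+1) = l" using enum_at[OF fL cL l] by auto
  have hI: "h ` {1..i+1} = L" using h by (simp add: bij_betw_def)
  have injh: "inj_on h {1..i+1}" using h by (simp add: bij_betw_def)
  have inj: "inj_on S {1..m}" using hyp by (simp add: simple_hypergraph_def)
  define E where "E = S \<circ> h"
  have EU: "\<And>A. (\<Union>k\<in>A. E k) = (\<Union>l'\<in>h ` A. S l')" unfolding E_def by (simp add: image_image)
  have hi: "h ` {1..i} = L - {l}"
  proof -
    have "{1..i} = {1..i+1} - {i+1}" by auto
    moreover have "h ` ({1..i+1} - {i+1}) = h ` {1..i+1} - h ` {i+1}"
      by (rule inj_on_image_set_diff) (use injh in auto)
    ultimately have "h ` {1..i} = h ` {1..i+1} - h ` {i+1}" by simp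
    then show ?thesis using hI h(2) by simp
  qed
  have c1: "\<forall>k\<in>{1..i+1}. E k \<in> S ` {1..m}" using hI Lsub E_def by auto
  have c2: "inj_on E {1..i+1}" unfolding E_def using injh inj Lsub hI
    by (metis comp_inj_on inj_on_subset)
  have U: "(\<Union>k\<in>{1..i}. E k) = (\<Union>l'\<in>L - {l}. S l')" by (simp only: EU hi)
  have c3: "E (i+1) \<subseteq> (\<Union>k\<in>{1..i}. E k)" using U sub h(2) E_def by simp
  have c4: "card (\<Union>k\<in>{1..i}. E k) = j" using U deg by (simp add: tdeg_def)
  have all: "\<forall>k\<in>{1..i}. \<not> E k \<subseteq> (\<Union>l\<in>{1..i+1} - {k}. E l)" using spec[OF H2, of E] c1 c2 c3 c4 by blast
  have "l2 \<in> h ` {1..i}" using l2 hi by auto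
  then obtain k where k: "k \<in> {1..i}" "h k = l2" by auto
  have "h ` ({1..i+1} - {k}) = h ` {1..i+1} - h ` {k}"
    by (rule inj_on_image_set_diff) (use injh k in auto)
  hence hk: "h ` ({1..i+1} - {k}) = L - {l2}" using hI k by simp
  have eqU: "(\<Union>l\<in>{1..i+1} - {k}. E l) = (\<Union>l'\<in>L - {l2}. S l')" by (simp only: EU hk)
  have nk: "\<not> E k \<subseteq> (\<Union>l\<in>{1..i+1} - {k}. E l)" using all k(1) by blast
  have Ek: "E k = S l2" using k(2) E_def by simp
  show ?thesis using nk eqU Ek by metis
qed

lemma bdry_nz:
  assumes "bdry S L M \<noteq> (0::'k::field)"
  shows "\<exists>l\<in>L. S l \<subseteq> (\<Union>l'\<in>L - {l}. S l') \<and> M = L - {l}"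
proof -
  from assms obtain l where "l \<in> {l\<in>L. S l \<subseteq> (\<Union>l'\<in>L - {l}. S l')}"
      and "(-1::'k) ^ pos L l * ind (L - {l}) M \<noteq> 0"
    unfolding bdry_apply by (rule sum.not_neutral_contains_not_neutral) blast
  then show ?thesis by (auto simp: ind_apply split: if_splits)
qed

lemma dif_nz:
  assumes "dif m S p x M \<noteq> (0::'k::field)"
  shows "\<exists>L\<in>idx m p. bdry S L M \<noteq> (0::'k)"
proof -
  obtain L where "L \<in> idx m p" "x L * bdry S L M \<noteq> (0::'k)"
    using assms unfolding dif_apply by (rule sum.not_neutral_contains_not_neutral)
  then show ?thesis by auto
qed

lemma H2_good:
  assumes hyp: "simple_hypergraph n m S"
    and H2: "\<forall>E :: nat \<Rightarrow> nat set.
              (\<forall>k\<in>{1..i+1}. E k \<in> S ` {1..m}) \<and> inj_on E {1..i+1} \<and>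
              E (i+1) \<subseteq> (\<Union>k\<in>{1..i}. E k) \<and>
              card (\<Union>k\<in>{1..i}. E k) = j \<longrightarrow>
              (\<forall>k\<in>{1..i}. \<not> E k \<subseteq> (\<Union>l\<in>{1..i+1} - {k}. E l))"
    and L: "L \<in> idxdeg m S i j" and L': "L' \<in> idx m (i+1)" and nz: "bdry S L' L \<noteq> (0::'k::field)"
  shows "(ind L :: nat set \<Rightarrow> 'k) \<in> dif m S (i+1) ` Tsp m (i+1)"
    and "bdry S L = (0 :: nat set \<Rightarrow> 'k)"
proof -
  obtain l where l: "l \<in> L'" "S l \<subseteq> (\<Union>l'\<in>L' - {l}. S l')" "L = L' - {l}"
    using bdry_nz[OF nz] by blast
  have deg: "tdeg S (L' - {l}) = j" using L l(3) by (simp add: idxdeg_def)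
  have others: "\<forall>l2\<in>L'. l2 \<noteq> l \<longrightarrow> \<not> S l2 \<subseteq> (\<Union>l'\<in>L' - {l2}. S l')"
    using H2_use[OF hyp H2 L' l(1) l(2) deg] by blast
  have F: "{x\<in>L'. S x \<subseteq> (\<Union>l'\<in>L' - {x}. S l')} = {l}" using others l by auto
  let ?a = "(-1::'k) ^ pos L' l"
  have b: "bdry S L' = scalef ?a (ind L)" unfolding bdry_def F l(3) by simp
  have aa: "?a * ?a = 1" by (simp add: power_mult_distrib[symmetric])
  have "ind L = scalef ?a (bdry S L')" using b aa by (simp add: fun_eq_iff mult.assoc[symmetric])
  also have "\<dots> = dif m S (i+1) (scalef ?a (ind L'))" by (rule dif_scale_ind[OF L', symmetric])
  finally show "(ind L :: nat set \<Rightarrow> 'k) \<in> dif m S (i+1) ` Tsp m (i+1)"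
    using ind_Tsp[OF L'] by blast
  have e: "{x\<in>L. S x \<subseteq> (\<Union>l'\<in>L - {x}. S l')} = {}"
  proof -
    { fix x assume x: "x \<in> L" "S x \<subseteq> (\<Union>l'\<in>L - {x}. S l')"
      then have xL: "x \<in> L'" and xl: "x \<noteq> l" using l(3) by auto
      have sub: "(\<Union>l'\<in>L - {x}. S l') \<subseteq> (\<Union>l'\<in>L' - {x}. S l')" using l(3) by auto
      have nx: "\<not> S x \<subseteq> (\<Union>l'\<in>L' - {x}. S l')" by (rule others[rule_format, OF xL xl])
      have False using nx subset_trans[OF x(2) sub] by (rule notE) }
    then show ?thesis by blast
  qed
  show "bdry S L = (0 :: nat set \<Rightarrow> 'k)" unfolding bdry_def e by simp
qed


lemma card_le_dim:
  fixes B :: "(nat set \<Rightarrow> 'k::field) set"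
  assumes "B \<subseteq> U" "V.independent B" "finite W" "U \<subseteq> V.span W"
  shows "card B \<le> V.dim U"
proof -
  obtain A where A: "A \<subseteq> U" "V.independent A" "U \<subseteq> V.span A" "card A = V.dim U"
    by (rule V.basis_exists)
  have fA: "finite A" using V.independent_span_bound[OF assms(3) A(2)] A(1) assms(4) by blast
  have "card B \<le> card A" using V.independent_span_bound[OF fA assms(2)] assms(1) A(3) by blast
  then show ?thesis using A(4) by simp
qed

lemma Tdeg_span: "Tdeg m S i j \<subseteq> V.span (ind ` idxdeg m S i j :: (nat set \<Rightarrow> 'k::field) set)"
proof
  fix c :: "nat set \<Rightarrow> 'k" assume c: "c \<in> Tdeg m S i j"
  have "c = (\<Sum>L\<in>idxdeg m S i j. scalef (c L) (ind L))" using c by (rule Tdeg_expand)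
  also have "\<dots> \<in> V.span (ind ` idxdeg m S i j)"
    by (intro V.span_sum V.span_scale V.span_base) auto
  finally show "c \<in> V.span (ind ` idxdeg m S i j)" .
qed

lemma part1:
  fixes K :: "'k::field itself"
  assumes hyp: "simple_hypergraph n m S"
    and H1: "\<forall>E :: nat \<Rightarrow> nat set.
              (\<forall>k\<in>{1..i}. E k \<in> S ` {1..m}) \<and> inj_on E {1..i} \<and>
              card (\<Union>k\<in>{1..i}. E k) = j \<and> 1 \<le> i \<longrightarrow>
              \<not> E 1 \<subseteq> (\<Union>k\<in>{2..i}. E k)"
  shows "Kerj m S i j \<subseteq>
          {a + b | a b. a \<in> module.span (scalef :: 'k \<Rightarrow> _) ((ind :: nat set \<Rightarrow> nat set \<Rightarrow> 'k) ` Bset K m S i j)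
                       \<and> b \<in> Imj m S i j}
        \<and> betti K m S i j \<le> card (Bset K m S i j)"
proof -
  define D where "D = idxdeg m S i j"
  define B where "B = Bset K m S i j"
  have fD: "finite D" unfolding D_def by (rule finite_idxdeg)
  have BD: "B \<subseteq> D" by (auto simp: B_def Bset_def D_def)
  have fB: "finite B" using BD fD finite_subset by blast
  have DI: "\<And>L. L \<in> D \<Longrightarrow> L \<in> idx m i" by (auto simp: D_def idxdeg_def)
  have b0: "\<And>L. L \<in> D \<Longrightarrow> bdry S L = (0:: nat set \<Rightarrow> 'k)"
  proof -
    fix L assume L: "L \<in> D"
    have e: "{l\<in>L. S l \<subseteq> (\<Union>l'\<in>L - {l}. S l')} = {}"
      using H1_use[OF hyp H1, of L] L by (auto simp: D_def)
    show "bdry S L = (0:: nat set \<Rightarrow> 'k)" unfolding bdry_def e by simp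
  qed
  have indK: "\<And>L. L \<in> D \<Longrightarrow> (ind L :: nat set \<Rightarrow> 'k) \<in> Kerj m S i j"
    using b0 DI by (auto simp: Kerj_def Tdeg_def ind_apply D_def dif_ind)
  have indQ: "\<And>L. L \<in> D - B \<Longrightarrow> (ind L :: nat set \<Rightarrow> 'k) \<in> Imj m S i j"
  proof -
    fix L assume L: "L \<in> D - B"
    then have "(ind L :: nat set \<Rightarrow> 'k) \<in> dif m S (i + 1) ` Tsp m (i + 1)"
      using indK[of L] by (auto simp: B_def Bset_def D_def)
    moreover have "(ind L :: nat set \<Rightarrow> 'k) \<in> Tdeg m S i j" using L by (auto simp: Tdeg_def ind_apply D_def)
    ultimately show "(ind L :: nat set \<Rightarrow> 'k) \<in> Imj m S i j" by (simp add: Imj_def)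
  qed
  have subI: "V.subspace (Imj m S i j :: (nat set \<Rightarrow> 'k) set)" by (rule subspace_Imj)
  have decomp: "c = (\<Sum>L\<in>B. scalef (c L) (ind L)) + (\<Sum>L\<in>D-B. scalef (c L) (ind L))"
    if "c \<in> Kerj m S i j" for c :: "nat set \<Rightarrow> 'k"
  proof -
    have "c = (\<Sum>L\<in>D. scalef (c L) (ind L))" using that Tdeg_expand[of c m S i j]
      by (simp add: Kerj_def D_def)
    also have "\<dots> = (\<Sum>L\<in>D-B. scalef (c L) (ind L)) + (\<Sum>L\<in>B. scalef (c L) (ind L))"
      by (rule sum.subset_diff[OF BD fD])
    finally show ?thesis by (simp add: add.commute)
  qed
  have A: "Kerj m S i j \<subseteq>
          {a + b | a b. a \<in> module.span (scalef :: 'k \<Rightarrow> _) ((ind :: nat set \<Rightarrow> nat set \<Rightarrow> 'k) ` B)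
                       \<and> b \<in> Imj m S i j}"
  proof
    fix c :: "nat set \<Rightarrow> 'k" assume c: "c \<in> Kerj m S i j"
    have "(\<Sum>L\<in>B. scalef (c L) (ind L)) \<in> V.span ((ind :: nat set \<Rightarrow> nat set \<Rightarrow> 'k) ` B)"
      by (intro V.span_sum V.span_scale V.span_base) auto
    moreover have "(\<Sum>L\<in>D-B. scalef (c L) (ind L)) \<in> Imj m S i j"
      by (intro V.subspace_sum[OF subI] V.subspace_scale[OF subI] indQ)
    ultimately show "c \<in> {a + b | a b. a \<in> module.span (scalef :: 'k \<Rightarrow> _) ((ind :: nat set \<Rightarrow> nat set \<Rightarrow> 'k) ` B)
                       \<and> b \<in> Imj m S i j}"
      using decomp[OF c] by blast
  qed
  have "Kerj m S i j \<subseteq> V.span ((ind :: nat set \<Rightarrow> nat set \<Rightarrow> 'k) ` D)"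
  proof
    fix c :: "nat set \<Rightarrow> 'k" assume c: "c \<in> Kerj m S i j"
    have "c = (\<Sum>L\<in>D. scalef (c L) (ind L))" using c Tdeg_expand[of c m S i j]
      by (simp add: Kerj_def D_def)
    also have "\<dots> \<in> V.span ((ind :: nat set \<Rightarrow> nat set \<Rightarrow> 'k) ` D)"
      by (intro V.span_sum V.span_scale V.span_base) auto
    finally show "c \<in> V.span ((ind :: nat set \<Rightarrow> nat set \<Rightarrow> 'k) ` D)" .
  qed
  then have dK: "V.dim (Kerj m S i j :: (nat set \<Rightarrow> 'k) set) \<le> card D"
    using V.dim_le_card[of "Kerj m S i j :: (nat set \<Rightarrow> 'k) set" "ind ` D"] fD
    by (simp add: card_ind)
  have "card ((ind :: nat set \<Rightarrow> nat set \<Rightarrow> 'k) ` (D - B)) \<le> V.dim (Imj m S i j :: (nat set \<Rightarrow> 'k) set)"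
    by (rule card_le_dim[of _ _ "ind ` D"]) (use indQ indep_ind[of "D - B"] fD Tdeg_span[of m S i j] in \<open>auto simp: Imj_def D_def\<close>)
  then have dI: "card (D - B) \<le> V.dim (Imj m S i j :: (nat set \<Rightarrow> 'k) set)" by (simp add: card_ind)
  have cD: "card D = card B + card (D - B)" using card_Diff_subset[OF fB BD] card_mono[OF fD BD] by simp
  have "betti K m S i j \<le> card B" unfolding betti_def using dK dI cD by linarith
  then show ?thesis using A B_def by simp
qed


lemma part2:
  fixes K :: "'k::field itself"
  assumes hyp: "simple_hypergraph n m S"
    and H2: "\<forall>E :: nat \<Rightarrow> nat set.
              (\<forall>k\<in>{1..i+1}. E k \<in> S ` {1..m}) \<and> inj_on E {1..i+1} \<and>
              E (i+1) \<subseteq> (\<Union>k\<in>{1..i}. E k) \<and>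
              card (\<Union>k\<in>{1..i}. E k) = j \<longrightarrow>
              (\<forall>k\<in>{1..i}. \<not> E k \<subseteq> (\<Union>l\<in>{1..i+1} - {k}. E l))"
  shows "(\<forall>c :: nat set \<Rightarrow> 'k.
           (\<Sum>L\<in>Bset K m S i j. scalef (c L) (ind L)) \<in> Imj m S i j \<longrightarrow> (\<forall>L\<in>Bset K m S i j. c L = 0))
        \<and> card (Bset K m S i j) \<le> betti K m S i j"
proof -
  define D where "D = idxdeg m S i j"
  define B where "B = Bset K m S i j"
  define IM where "IM = (dif m S (i + 1) ` Tsp m (i + 1) :: (nat set \<Rightarrow> 'k) set)"
  have fD: "finite D" unfolding D_def by (rule finite_idxdeg)
  have BD: "B \<subseteq> D" by (auto simp: B_def Bset_def D_def)
  have fB: "finite B" using BD fD finite_subset by blast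
  have DI: "\<And>L. L \<in> D \<Longrightarrow> L \<in> idx m i" by (auto simp: D_def idxdeg_def)
  have key: "ind L \<in> IM \<and> bdry S L = (0 :: nat set \<Rightarrow> 'k)" if y: "y \<in> IM" and L: "L \<in> D" and nz: "y L \<noteq> 0"
    for y :: "nat set \<Rightarrow> 'k" and L
  proof -
    obtain x where x: "y = dif m S (i+1) x" using y unfolding IM_def by blast
    have "dif m S (i+1) x L \<noteq> (0::'k)" using x nz by simp
    then obtain L' where L': "L' \<in> idx m (i+1)" "bdry S L' L \<noteq> (0::'k)" by (blast dest: dif_nz)
    have LD': "L \<in> idxdeg m S i j" using L by (simp add: D_def)
    show ?thesis using H2_good[OF hyp H2 LD' L'(1) L'(2)] unfolding IM_def by blast
  qed
  have notB: "y L = 0" if "y \<in> IM" "L \<in> B" for y :: "nat set \<Rightarrow> 'k" and L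
    using key[OF that(1), of L] that BD by (auto simp: B_def Bset_def IM_def)
  have A: "\<forall>c :: nat set \<Rightarrow> 'k.
           (\<Sum>L\<in>B. scalef (c L) (ind L)) \<in> Imj m S i j \<longrightarrow> (\<forall>L\<in>B. c L = 0)"
  proof (intro allI impI ballI)
    fix c :: "nat set \<Rightarrow> 'k" and L0
    assume s: "(\<Sum>L\<in>B. scalef (c L) (ind L)) \<in> Imj m S i j" and L0: "L0 \<in> B"
    have "(\<Sum>L\<in>B. scalef (c L) (ind L)) L0 = (\<Sum>L\<in>B. if L = L0 then c L0 else 0)"
      unfolding sum_fun_apply by (rule sum.cong) (auto simp: ind_apply)
    also have "\<dots> = c L0" using fB L0 by simp
    finally show "c L0 = 0" using notB[of "\<Sum>L\<in>B. scalef (c L) (ind L)" L0] s L0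
      by (simp add: Imj_def IM_def)
  qed
  define P where "P = {L\<in>D. ind L \<in> IM}"
  have PD: "P \<subseteq> D" by (auto simp: P_def)
  have fP: "finite P" using PD fD finite_subset by blast
  have BP: "B \<inter> P = {}" by (auto simp: B_def Bset_def P_def IM_def)
  have Isp: "Imj m S i j \<subseteq> V.span ((ind :: nat set \<Rightarrow> nat set \<Rightarrow> 'k) ` P)"
  proof
    fix y :: "nat set \<Rightarrow> 'k" assume y: "y \<in> Imj m S i j"
    have "y = (\<Sum>L\<in>D. scalef (y L) (ind L))" using y Tdeg_expand[of y m S i j]
      by (simp add: Imj_def D_def)
    also have "\<dots> \<in> V.span ((ind :: nat set \<Rightarrow> nat set \<Rightarrow> 'k) ` P)"
    proof (rule V.span_sum)
      fix L assume L: "L \<in> D"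
      show "scalef (y L) (ind L) \<in> V.span ((ind :: nat set \<Rightarrow> nat set \<Rightarrow> 'k) ` P)"
      proof (cases "y L = 0")
        case True
        then have z: "scalef (y L) (ind L) = (0 :: nat set \<Rightarrow> 'k)" by (simp add: fun_eq_iff)
        show ?thesis unfolding z by (rule V.span_zero)
      next
        case False
        then have "L \<in> P" using key[of y L] y L by (auto simp: P_def Imj_def IM_def)
        then show ?thesis by (intro V.span_scale V.span_base) auto
      qed
    qed
    finally show "y \<in> V.span ((ind :: nat set \<Rightarrow> nat set \<Rightarrow> 'k) ` P)" .
  qed
  have dI: "V.dim (Imj m S i j :: (nat set \<Rightarrow> 'k) set) \<le> card P"
    using V.dim_le_card[OF Isp] fP by (simp add: card_ind)
  have PK: "(ind L :: nat set \<Rightarrow> 'k) \<in> Kerj m S i j" if L: "L \<in> P" for L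
  proof -
    have LD: "L \<in> D" and LI: "(ind L :: nat set \<Rightarrow> 'k) \<in> IM" using L by (auto simp: P_def)
    have "bdry S L = (0 :: nat set \<Rightarrow> 'k)" using key[OF LI LD] by (simp add: ind_apply)
    then show ?thesis using LD DI[OF LD] by (auto simp: Kerj_def Tdeg_def ind_apply D_def dif_ind)
  qed
  have BK: "(ind L :: nat set \<Rightarrow> 'k) \<in> Kerj m S i j" if "L \<in> B" for L
    using that by (simp add: B_def Bset_def)
  have "card ((ind :: nat set \<Rightarrow> nat set \<Rightarrow> 'k) ` (B \<union> P)) \<le> V.dim (Kerj m S i j :: (nat set \<Rightarrow> 'k) set)"
    by (rule card_le_dim[of _ _ "ind ` D"])
      (use PK BK indep_ind[of "B \<union> P"] fB fP fD Tdeg_span[of m S i j] in \<open>auto simp: Kerj_def D_def\<close>)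
  then have dK: "card B + card P \<le> V.dim (Kerj m S i j :: (nat set \<Rightarrow> 'k) set)"
    using card_Un_disjoint[OF fB fP BP] by (simp add: card_ind)
  have "card B \<le> betti K m S i j" unfolding betti_def using dK dI by linarith
  then show ?thesis using A B_def by simp
qed


lemma aux_mul: "1 \<le> (i::nat) \<Longrightarrow> t + (i - 1) * t = t * i"
  by (cases i) (simp_all add: mult.commute)

lemma H1_max:
  assumes hyp: "simple_hypergraph n m S" and j: "j = Max (card ` S ` {1..m}) * i"
  shows "\<forall>E :: nat \<Rightarrow> nat set.
              (\<forall>k\<in>{1..i}. E k \<in> S ` {1..m}) \<and> inj_on E {1..i} \<and>
              card (\<Union>k\<in>{1..i}. E k) = j \<and> 1 \<le> i \<longrightarrow>
              \<not> E 1 \<subseteq> (\<Union>k\<in>{2..i}. E k)"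
proof (intro allI impI notI)
  fix E :: "nat \<Rightarrow> nat set"
  assume a: "(\<forall>k\<in>{1..i}. E k \<in> S ` {1..m}) \<and> inj_on E {1..i} \<and> card (\<Union>k\<in>{1..i}. E k) = j \<and> 1 \<le> i"
    and sub: "E 1 \<subseteq> (\<Union>k\<in>{2..i}. E k)"
  define t where "t = Max (card ` S ` {1..m})"
  have Ek: "card (E k) \<le> t \<and> 2 \<le> card (E k)" if k: "k \<in> {1..i}" for k
  proof -
    have "E k \<in> S ` {1..m}" using a k by blast
    then obtain b where "b \<in> {1..m}" "E k = S b" by blast
    then show ?thesis using hyp unfolding t_def simple_hypergraph_def by (auto intro!: Max_ge)
  qed
  have i1: "1 \<le> i" using a by simp
  have t2: "2 \<le> t" using Ek[of 1] i1 by auto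
  have "(\<Union>k\<in>{1..i}. E k) = (\<Union>k\<in>{2..i}. E k)"
  proof -
    have "{1..i} = insert 1 {2..i}" using i1 by auto
    then show ?thesis using sub by auto
  qed
  hence "j = card (\<Union>k\<in>{2..i}. E k)" using a by simp
  also have "\<dots> \<le> (\<Sum>k\<in>{2..i}. card (E k))" by (rule card_UN_le) simp
  also have "\<dots> \<le> card {2..i} * t" using sum_bounded_above[of "{2..i}" "\<lambda>k. card (E k)" t] Ek by auto
  also have "card {2..i} = i - 1" by simp
  finally have "t * i \<le> (i - 1) * t" using j t_def by simp
  moreover have "t + (i - 1) * t = t * i" using i1 by (rule aux_mul)
  ultimately show False using t2 by linarith
qed

lemma H2_max:
  assumes hyp: "simple_hypergraph n m S" and j: "j = Max (card ` S ` {1..m}) * i"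
  shows "\<forall>E :: nat \<Rightarrow> nat set.
              (\<forall>k\<in>{1..i+1}. E k \<in> S ` {1..m}) \<and> inj_on E {1..i+1} \<and>
              E (i+1) \<subseteq> (\<Union>k\<in>{1..i}. E k) \<and>
              card (\<Union>k\<in>{1..i}. E k) = j \<longrightarrow>
              (\<forall>k\<in>{1..i}. \<not> E k \<subseteq> (\<Union>l\<in>{1..i+1} - {k}. E l))"
proof (intro allI impI ballI notI)
  fix E :: "nat \<Rightarrow> nat set" and k
  assume a: "(\<forall>k\<in>{1..i+1}. E k \<in> S ` {1..m}) \<and> inj_on E {1..i+1} \<and>
              E (i+1) \<subseteq> (\<Union>k\<in>{1..i}. E k) \<and> card (\<Union>k\<in>{1..i}. E k) = j"
    and k: "k \<in> {1..i}" and sub: "E k \<subseteq> (\<Union>l\<in>{1..i+1} - {k}. E l)"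
  define t where "t = Max (card ` S ` {1..m})"
  have Ek: "card (E q) \<le> t \<and> finite (E q) \<and> (\<exists>b\<in>{1..m}. E q = S b)" if q: "q \<in> {1..i+1}" for q
  proof -
    have "E q \<in> S ` {1..m}" using a q by blast
    then obtain b where b: "b \<in> {1..m}" "E q = S b" by blast
    have "S b \<subseteq> {1..n}" using hyp b(1) by (simp add: simple_hypergraph_def)
    then have "finite (S b)" using finite_subset by blast
    then show ?thesis using b unfolding t_def by (auto intro!: Max_ge)
  qed
  define U where "U = (\<Union>l\<in>{1..i}-{k}. E l)"
  have fU: "finite U" unfolding U_def using Ek by auto
  have "card U \<le> (\<Sum>l\<in>{1..i}-{k}. card (E l))" unfolding U_def by (rule card_UN_le) simp
  also have "\<dots> \<le> card ({1..i}-{k}) * t"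
    using sum_bounded_above[of "{1..i}-{k}" "\<lambda>l. card (E l)" t] Ek by auto
  also have "card ({1..i}-{k}) = i - 1" using k by simp
  finally have cU: "card U \<le> (i - 1) * t" .
  have un: "(\<Union>l\<in>{1..i}. E l) = E k \<union> U"
  proof -
    have "{1..i} = insert k ({1..i}-{k})" using k by auto
    then show ?thesis unfolding U_def by auto
  qed
  have fEk: "finite (E k)" and cEk: "card (E k) \<le> t" using Ek[of k] k by auto
  have "card (E k \<union> U) + card (E k \<inter> U) = card (E k) + card U" using card_Un_Int[OF fEk fU] by simp
  moreover have "card (E k \<union> U) = t * i" using un a j t_def by simp
  moreover have "t + (i - 1) * t = t * i" using k by (intro aux_mul) simp
  ultimately have "card (E k \<inter> U) = 0" using cU cEk by linarith
  hence disj: "E k \<inter> U = {}" using fEk by simp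
  have "(\<Union>l\<in>{1..i+1} - {k}. E l) = E (i+1) \<union> U"
  proof -
    have "{1..i+1} - {k} = insert (i+1) ({1..i}-{k})" using k by auto
    then show ?thesis unfolding U_def by auto
  qed
  hence sub2: "E k \<subseteq> E (i+1)" using sub disj by blast
  obtain b1 where b1: "b1 \<in> {1..m}" "E k = S b1" using Ek[of k] k by auto
  obtain b2 where b2: "b2 \<in> {1..m}" "E (i+1) = S b2" using Ek[of "i+1"] by auto
  have "E k \<noteq> E (i+1)"
  proof
    assume "E k = E (i+1)"
    then have "k = i + 1" using a k by (auto dest: inj_onD)
    then show False using k by simp
  qed
  then have "b1 \<noteq> b2" using b1 b2 by auto
  then have "\<not> S b1 \<subseteq> S b2" using hyp b1 b2 by (simp add: simple_hypergraph_def)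
  then show False using sub2 b1 b2 by simp
qed

theorem lemma2p2:
  fixes K :: "'k::field itself"
    and n m i j :: nat
    and S :: "nat \<Rightarrow> nat set"
  assumes hyp: "simple_hypergraph n m S"
  defines "B \<equiv> Bset K m S i j"
    and "\<beta> \<equiv> betti K m S i j"
    and "H1 \<equiv> (\<forall>E :: nat \<Rightarrow> nat set.
              (\<forall>k\<in>{1..i}. E k \<in> S ` {1..m}) \<and> inj_on E {1..i} \<and>
              card (\<Union>k\<in>{1..i}. E k) = j \<and> 1 \<le> i \<longrightarrow>
              \<not> E 1 \<subseteq> (\<Union>k\<in>{2..i}. E k))"
    and "H2 \<equiv> (\<forall>E :: nat \<Rightarrow> nat set.
              (\<forall>k\<in>{1..i+1}. E k \<in> S ` {1..m}) \<and> inj_on E {1..i+1} \<and>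
              E (i+1) \<subseteq> (\<Union>k\<in>{1..i}. E k) \<and>
              card (\<Union>k\<in>{1..i}. E k) = j \<longrightarrow>
              (\<forall>k\<in>{1..i}. \<not> E k \<subseteq> (\<Union>l\<in>{1..i+1} - {k}. E l)))"
  shows
    "(H1 \<longrightarrow>
        Kerj m S i j \<subseteq>
          {a + b | a b. a \<in> module.span (scalef :: 'k \<Rightarrow> _) ((ind :: nat set \<Rightarrow> nat set \<Rightarrow> 'k) ` B)
                       \<and> b \<in> Imj m S i j}
        \<and> \<beta> \<le> card B)
     \<and> (H2 \<longrightarrow>
        (\<forall>c :: nat set \<Rightarrow> 'k.
           (\<Sum>L\<in>B. scalef (c L) (ind L)) \<in> Imj m S i j \<longrightarrow> (\<forall>L\<in>B. c L = 0))
        \<and> card B \<le> \<beta>)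
     \<and> (H1 \<and> H2 \<longrightarrow> \<beta> = card B)
     \<and> (j = Max (card ` S ` {1..m}) * i \<longrightarrow> \<beta> = card B)"
proof -
  have P1: "H1 \<Longrightarrow> Kerj m S i j \<subseteq>
          {a + b | a b. a \<in> module.span (scalef :: 'k \<Rightarrow> _) ((ind :: nat set \<Rightarrow> nat set \<Rightarrow> 'k) ` B)
                       \<and> b \<in> Imj m S i j}
        \<and> \<beta> \<le> card B"
    unfolding H1_def B_def \<beta>_def by (rule part1[OF hyp])
  have P2: "H2 \<Longrightarrow> (\<forall>c :: nat set \<Rightarrow> 'k.
           (\<Sum>L\<in>B. scalef (c L) (ind L)) \<in> Imj m S i j \<longrightarrow> (\<forall>L\<in>B. c L = 0))
        \<and> card B \<le> \<beta>"
    unfolding H2_def B_def \<beta>_def by (rule part2[OF hyp])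
  have P3: "H1 \<and> H2 \<longrightarrow> \<beta> = card B" using P1 P2 by fastforce
  have P4: "j = Max (card ` S ` {1..m}) * i \<longrightarrow> \<beta> = card B"
  proof
    assume "j = Max (card ` S ` {1..m}) * i"
    then have "H1" "H2" unfolding H1_def H2_def
      by (rule H1_max[OF hyp], rule H2_max[OF hyp])
    then show "\<beta> = card B" using P3 by blast
  qed
  show ?thesis using P1 P2 P3 P4 by blast
qed

end
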